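(* For positive integers $a<b\le c$, the words in $\mathbb{P}^*$ that are Wilf equivalent to $bac$ are exactly $bac$ and $cab$.
   Context: $\mathbb{P}^*$ is the set of finite words over the positive integers (usual order). For $w=w_1\ldots w_n$, $\mathrm{wt}(w)=t^nx^{\sum_i w_i}$. For words $u,w$, $u\le w$ (generalized factor order) if there are $|u|$ consecutive letters of $w$ whose $i$-th letter is $\ge$ the $i$-th letter of $u$ for each $i$. $F(u;t,x)=\sum_{w\in\mathbb{P}^*,\,u\le w}\mathrm{wt}(w)$, and $u\backsim v$ (Wilf equivalence) iff $F(u;t,x)=F(v;t,x)$. *)

theory Defs
  imports Main
begin

definition pword :: "nat list \<Rightarrow> bool" where
  "pword w \<longleftrightarrow> (\<forall>x \<in> set w. 1 \<le> x)"

definition gfo :: "nat list \<Rightarrow> nat list \<Rightarrow> bool" where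
  "gfo u w \<longleftrightarrow> (\<exists>i. i + length u \<le> length w \<and> (\<forall>j < length u. u ! j \<le> w ! (i + j)))"

text \<open>The generating function F(u;t,x) = sum over w >= u of t^|w| x^(sum w), represented by
  its coefficient function: coefficient of t^n x^s is the number of words w in P* with
  length n and letter sum s such that u <= w (finitely many).\<close>
definition F :: "nat list \<Rightarrow> nat \<Rightarrow> nat \<Rightarrow> nat" where
  "F u n s = card {w. pword w \<and> length w = n \<and> sum_list w = s \<and> gfo u w}"

definition wilf_equiv :: "nat list \<Rightarrow> nat list \<Rightarrow> bool" where
  "wilf_equiv u v \<longleftrightarrow> F u = F v"

end

theory Submission
  imports Defs
begin

definition C :: "nat \<Rightarrow> nat \<Rightarrow> nat" where
  "C n k = card {d::nat list. length d = n \<and> sum_list d = k}"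
definition box :: "nat list \<Rightarrow> nat \<Rightarrow> nat list set" where
  "box L s = {w. list_all2 (\<le>) L w \<and> sum_list w = s}"
definition g :: "nat \<Rightarrow> nat \<Rightarrow> nat \<Rightarrow> nat" where
  "g n m s = (if m \<le> s then C n (s - m) else 0)"

lemma finD: "finite {d::nat list. length d = n \<and> sum_list d = k}"
proof -
  have "{d::nat list. length d = n \<and> sum_list d = k} \<subseteq> {d. set d \<subseteq> {0..k} \<and> length d = n}"
    using member_le_sum_list by fastforce
  moreover have "finite {d::nat list. set d \<subseteq> {0..k} \<and> length d = n}"
    by (rule finite_lists_length_eq) simp
  ultimately show ?thesis by (rule finite_subset)
qed

lemma C0: "C n 0 = 1"
proof -
  have "{d::nat list. length d = n \<and> sum_list d = 0} = {replicate n 0}"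
    by (auto simp: sum_list_eq_0_iff intro: replicate_eqI)
  then show ?thesis by (simp add: C_def)
qed

lemma sum_map2_add: "length L = length d \<Longrightarrow> sum_list (map2 (+) L d) = sum_list L + sum_list (d::nat list)"
  proof (induction L arbitrary: d)
  case (Cons a L) then show ?case by (cases d) auto
qed simp

lemma la2_sum: "list_all2 (\<le>) L w \<Longrightarrow> sum_list L \<le> sum_list (w::nat list)"
  by (induction rule: list_all2_induct) auto

lemma box_image:
  assumes "sum_list L \<le> s"
  shows "box L s = (\<lambda>d. map2 (+) L d) ` {d. length d = length L \<and> sum_list d = s - sum_list L}"
proof
  show "box L s \<subseteq> (\<lambda>d. map2 (+) L d) ` {d. length d = length L \<and> sum_list d = s - sum_list L}"
  proof
    fix w assume w: "w \<in> box L s"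
    then have la: "list_all2 (\<le>) L w" and sw: "sum_list w = s" by (auto simp: box_def)
    have len: "length w = length L" using la by (simp add: list_all2_lengthD)
    define d where "d = map2 (-) w L"
    have ld: "length d = length L" using len by (simp add: d_def)
    have wd: "w = map2 (+) L d"
      using la len by (auto simp: d_def list_all2_conv_all_nth intro!: nth_equalityI)
    have "sum_list d = s - sum_list L" using sum_map2_add[of L d] ld wd sw by simp
    with ld wd show "w \<in> (\<lambda>d. map2 (+) L d) ` {d. length d = length L \<and> sum_list d = s - sum_list L}"
      by blast
  qed
  show "(\<lambda>d. map2 (+) L d) ` {d. length d = length L \<and> sum_list d = s - sum_list L} \<subseteq> box L s"
    using assms by (auto simp: box_def sum_map2_add list_all2_conv_all_nth)
qed

lemma inj_map2: "inj_on (\<lambda>d. map2 (+) L (d::nat list)) {d. length d = length L \<and> sum_list d = k}"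
proof (rule inj_onI)
  fix d1 d2 assume d1: "d1 \<in> {d. length d = length L \<and> sum_list d = k}"
    and d2: "d2 \<in> {d. length d = length L \<and> sum_list d = k}"
    and e: "map2 (+) L d1 = map2 (+) L d2"
  show "d1 = d2"
  proof (rule nth_equalityI)
    show "length d1 = length d2" using d1 d2 by simp
    fix i assume "i < length d1"
    then have "map2 (+) L d1 ! i = map2 (+) L d2 ! i" using e by simp
    then show "d1 ! i = d2 ! i" using \<open>i < length d1\<close> d1 d2 by simp
  qed
qed

lemma box_fin: "finite (box L s)"
proof (cases "sum_list L \<le> s")
  case True then show ?thesis using box_image finD by simp
next
  case False then have "box L s = {}" using la2_sum by (fastforce simp: box_def)
  then show ?thesis by simp
qed

lemma box_card: "card (box L s) = g (length L) (sum_list L) s"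
proof (cases "sum_list L \<le> s")
  case True then show ?thesis
    using box_image[OF True] card_image[OF inj_map2] by (simp add: g_def C_def)
next
  case False then have "box L s = {}" using la2_sum by (fastforce simp: box_def)
  then show ?thesis using False by (simp add: g_def)
qed

lemma box_Int: "length L = length L' \<Longrightarrow> box L s \<inter> box L' s = box (map2 max L L') s"
  by (auto simp: box_def list_all2_conv_all_nth)

lemma g_inj: assumes "\<And>s. g n m s = g n m' s" shows "m = m'"
proof (rule ccontr)
  assume "m \<noteq> m'"
  then consider "m < m'" | "m' < m" by linarith
  then show False
  proof cases
    case 1 then show False using assms[of m] by (simp add: g_def C0)
  next
    case 2 then show False using assms[of m'] by (simp add: g_def C0)
  qed
qed

lemma gfo3: "gfo [x,y,z] w \<longleftrightarrow> (\<exists>i. i + 3 \<le> length w \<and> x \<le> w!i \<and> y \<le> w!(i+1) \<and> z \<le> w!(i+2))"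
  unfolding gfo_def by (auto simp: less_Suc_eq numeral_3_eq_3)


lemma ex3: "(\<exists>i::nat. i + 3 \<le> 3 \<and> P i) \<longleftrightarrow> P 0" by auto
lemma ex4: "(\<exists>i::nat. i + 3 \<le> 4 \<and> P i) \<longleftrightarrow> P 0 \<or> P 1"
proof
  assume "\<exists>i::nat. i + 3 \<le> 4 \<and> P i"
  then obtain i where "i \<le> 1" "P i" by auto
  then show "P 0 \<or> P 1" by (cases i) auto
qed auto
lemma ex5: "(\<exists>i::nat. i + 3 \<le> 5 \<and> P i) \<longleftrightarrow> P 0 \<or> P 1 \<or> P 2"
proof
  assume "\<exists>i::nat. i + 3 \<le> 5 \<and> P i"
  then obtain i where "i \<le> 2" "P i" by auto
  then have "i = 0 \<or> i = 1 \<or> i = 2" by arith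
  then show "P 0 \<or> P 1 \<or> P 2" using \<open>P i\<close> by auto
next
  assume "P 0 \<or> P 1 \<or> P 2"
  then show "\<exists>i::nat. i + 3 \<le> 5 \<and> P i"
  proof (elim disjE)
    assume "P 1" then show ?thesis by (intro exI[of _ 1]) simp
  next
    assume "P 2" then show ?thesis by (intro exI[of _ 2]) simp
  qed (intro exI[of _ 0]; simp)
qed

lemma S3: assumes "1 \<le> x" "1 \<le> y" "1 \<le> z"
  shows "{w. pword w \<and> length w = 3 \<and> sum_list w = s \<and> gfo [x,y,z] w} = box [x,y,z] s"
proof -
  have "w \<in> box [x,y,z] s \<longleftrightarrow> pword w \<and> length w = 3 \<and> sum_list w = s \<and> gfo [x,y,z] w" for w
  proof (cases "length w = 3")
    case True
    then obtain p q r where w: "w = [p,q,r]" by (auto simp: numeral_eq_Suc length_Suc_conv)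
    show ?thesis unfolding gfo3 True ex3 unfolding w using assms by (simp add: box_def pword_def) linarith
  next
    case False then show ?thesis by (auto simp: box_def dest: list_all2_lengthD)
  qed
  then show ?thesis by auto
qed

lemma S4: assumes "1 \<le> x" "1 \<le> y" "1 \<le> z"
  shows "{w. pword w \<and> length w = 4 \<and> sum_list w = s \<and> gfo [x,y,z] w} = box [x,y,z,1] s \<union> box [1,x,y,z] s"
proof -
  have "w \<in> box [x,y,z,1] s \<union> box [1,x,y,z] s \<longleftrightarrow> pword w \<and> length w = 4 \<and> sum_list w = s \<and> gfo [x,y,z] w" for w
  proof (cases "length w = 4")
    case True
    then obtain p q r t where w: "w = [p,q,r,t]" by (auto simp: numeral_eq_Suc length_Suc_conv)
    show ?thesis unfolding gfo3 True ex4 unfolding w using assms by (simp add: box_def pword_def) linarith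
  next
    case False then show ?thesis by (auto simp: box_def dest: list_all2_lengthD)
  qed
  then show ?thesis by auto
qed

lemma S5: assumes "1 \<le> x" "1 \<le> y" "1 \<le> z"
  shows "{w. pword w \<and> length w = 5 \<and> sum_list w = s \<and> gfo [x,y,z] w} = box [x,y,z,1,1] s \<union> box [1,x,y,z,1] s \<union> box [1,1,x,y,z] s"
proof -
  have "w \<in> box [x,y,z,1,1] s \<union> box [1,x,y,z,1] s \<union> box [1,1,x,y,z] s \<longleftrightarrow> pword w \<and> length w = 5 \<and> sum_list w = s \<and> gfo [x,y,z] w" for w
  proof (cases "length w = 5")
    case True
    then obtain p q r t o' where w: "w = [p,q,r,t,o']" by (auto simp: numeral_eq_Suc length_Suc_conv)
    show ?thesis unfolding gfo3 True ex5 unfolding w using assms by (simp add: box_def pword_def) linarith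
  next
    case False then show ?thesis by (auto simp: box_def dest: list_all2_lengthD)
  qed
  then show ?thesis by auto
qed


lemma F3: assumes "1 \<le> x" "1 \<le> y" "1 \<le> z"
  shows "F [x,y,z] 3 s = g 3 (x+y+z) s"
  unfolding F_def S3[OF assms] box_card by (simp add: add.assoc numeral_3_eq_3)

lemma F4: assumes "1 \<le> x" "1 \<le> y" "1 \<le> z"
  defines "L0 \<equiv> [x,y,z,1]" and "L1 \<equiv> [1,x,y,z]"
  shows "int (F [x,y,z] 4 s) = 2 * int (g 4 (x+y+z+1) s) - int (g 4 (sum_list (map2 max L0 L1)) s)"
proof -
  have ll: "length L0 = length L1" by (simp add: L0_def L1_def)
  have l: "length L0 = 4" "length L1 = 4" "length (map2 max L0 L1) = 4" by (simp_all add: L0_def L1_def)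
  have sm: "sum_list L0 = x+y+z+1" "sum_list L1 = x+y+z+1" by (simp_all add: L0_def L1_def)
  have e: "card (box L0 s) + card (box L1 s) = card (box L0 s \<union> box L1 s) + card (box L0 s \<inter> box L1 s)"
    by (rule card_Un_Int) (auto simp: box_fin)
  have F: "F [x,y,z] 4 s = card (box L0 s \<union> box L1 s)"
    unfolding F_def S4[OF assms(1-3)] L0_def L1_def by simp
  show ?thesis using e unfolding F box_Int[OF ll] box_card l sm by simp
qed

lemma F5: assumes "1 \<le> x" "1 \<le> y" "1 \<le> z"
  defines "L0 \<equiv> [x,y,z,1,1]" and "L1 \<equiv> [1,x,y,z,1]" and "L2 \<equiv> [1,1,x,y,z]"
  shows "int (F [x,y,z] 5 s) = 3 * int (g 5 (x+y+z+2) s)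
     - int (g 5 (sum_list (map2 max L0 L1)) s) - int (g 5 (sum_list (map2 max L0 L2)) s)
     - int (g 5 (sum_list (map2 max L1 L2)) s) + int (g 5 (sum_list (map2 max (map2 max L0 L1) L2)) s)"
proof -
  let ?A0 = "box L0 s" and ?A1 = "box L1 s" and ?A2 = "box L2 s"
  have ll: "length L0 = length L1" "length L0 = length L2" "length L1 = length L2" by (simp_all add: L0_def L1_def L2_def)
  have l: "length L0 = 5" "length L1 = 5" "length L2 = 5" "length (map2 max L0 L1) = 5"
    "length (map2 max L0 L2) = 5" "length (map2 max L1 L2) = 5" "length (map2 max (map2 max L0 L1) L2) = 5"
    by (simp_all add: L0_def L1_def L2_def)
  have sm: "sum_list L0 = x+y+z+2" "sum_list L1 = x+y+z+2" "sum_list L2 = x+y+z+2"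
    by (simp_all add: L0_def L1_def L2_def)
  have e1: "card ?A0 + card ?A1 = card (?A0 \<union> ?A1) + card (?A0 \<inter> ?A1)"
    by (rule card_Un_Int) (auto simp: box_fin)
  have e2: "card (?A0 \<union> ?A1) + card ?A2 = card (?A0 \<union> ?A1 \<union> ?A2) + card ((?A0 \<union> ?A1) \<inter> ?A2)"
    by (rule card_Un_Int) (auto simp: box_fin)
  have e3: "card (?A0 \<inter> ?A2) + card (?A1 \<inter> ?A2) = card ((?A0 \<inter> ?A2) \<union> (?A1 \<inter> ?A2)) + card ((?A0 \<inter> ?A2) \<inter> (?A1 \<inter> ?A2))"
    by (rule card_Un_Int) (auto simp: box_fin)
  have s1: "(?A0 \<union> ?A1) \<inter> ?A2 = (?A0 \<inter> ?A2) \<union> (?A1 \<inter> ?A2)" by blast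
  have s2: "(?A0 \<inter> ?A2) \<inter> (?A1 \<inter> ?A2) = box (map2 max (map2 max L0 L1) L2) s"
  proof -
    have "(?A0 \<inter> ?A2) \<inter> (?A1 \<inter> ?A2) = (?A0 \<inter> ?A1) \<inter> ?A2" by blast
    then show ?thesis using box_Int ll l by simp
  qed
  have F: "F [x,y,z] 5 s = card (?A0 \<union> ?A1 \<union> ?A2)"
    unfolding F_def S5[OF assms(1-3)] L0_def L1_def L2_def by simp
  show ?thesis
    using e1 e2 e3[unfolded s2] unfolding F s1 box_Int[OF ll(1)] box_Int[OF ll(2)] box_Int[OF ll(3)]
    unfolding box_card by (simp add: l sm)
qed


lemma g_lt: "s < m \<Longrightarrow> g n m s = 0" by (simp add: g_def)
lemma g_eq: "g n m m = 1" by (simp add: g_def C0)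

lemma g_pair:
  assumes h: "\<And>s. int (g n q s) - int (g n p s) = int (g n q' s) - int (g n p' s)"
    and pq: "p < q" and pq': "p' \<le> q'"
  shows "p = p' \<and> q = q'"
proof -
  have pp: "p = p'"
  proof (rule ccontr)
    assume "p \<noteq> p'"
    then consider "p' < p" | "p < p'" by linarith
    then show False
    proof cases
      case 1
      have "q' = p'"
      proof (rule ccontr)
        assume "q' \<noteq> p'"
        then have "p' < q'" using pq' by simp
        then show False using h[of p'] 1 pq by (simp add: g_lt g_eq)
      qed
      then have "int (g n q s) - int (g n p s) = 0" for s using h[of s] by simp
      from this[of p] show False using pq by (simp add: g_lt g_eq)
    next
      case 2
      show False using h[of p] 2 pq pq' by (simp add: g_lt g_eq)
    qed
  qed
  moreover have "q = q'"
    by (rule g_inj[of n]) (use h pp in \<open>simp\<close>)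
  ultimately show ?thesis by simp
qed

lemma gfo_rev: assumes "gfo u w" shows "gfo (rev u) (rev w)"
proof -
  from assms obtain i where i: "i + length u \<le> length w" and d: "\<forall>j<length u. u ! j \<le> w ! (i + j)"
    by (auto simp: gfo_def)
  let ?i = "length w - length u - i"
  have "\<forall>j<length u. rev u ! j \<le> rev w ! (?i + j)"
  proof (intro allI impI)
    fix j assume j: "j < length u"
    have "length u - Suc j < length u" using j by arith
    then have a: "u ! (length u - Suc j) \<le> w ! (i + (length u - Suc j))" using d by blast
    have b: "i + (length u - Suc j) = length w - Suc (?i + j)" using i j by arith
    have c: "?i + j < length w" using i j by arith
    have "rev u ! j = u ! (length u - Suc j)" using j by (rule rev_nth)
    moreover have "rev w ! (?i + j) = w ! (length w - Suc (?i + j))" using c by (rule rev_nth)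
    ultimately show "rev u ! j \<le> rev w ! (?i + j)" using a b by simp
  qed
  then show ?thesis using i unfolding gfo_def by (intro exI[of _ ?i]) simp
qed

lemma F_rev: "F (rev u) = F u"
proof (intro ext)
  fix n s
  let ?A = "{w. pword w \<and> length w = n \<and> sum_list w = s \<and> gfo (rev u) w}"
  let ?B = "{w. pword w \<and> length w = n \<and> sum_list w = s \<and> gfo u w}"
  have "?A = rev ` ?B"
  proof (intro equalityI subsetI)
    fix w assume w: "w \<in> ?A"
    have g: "gfo u (rev w)" using gfo_rev[of "rev u" w] w by simp
    have "rev w \<in> ?B" using w g by (simp add: pword_def sum_list_rev)
    moreover have "w = rev (rev w)" by simp
    ultimately show "w \<in> rev ` ?B" by blast
  next
    fix w assume "w \<in> rev ` ?B"
    then obtain v where v: "v \<in> ?B" and wv: "w = rev v" by blast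
    have "gfo (rev u) (rev v)" using gfo_rev v by simp
    then show "w \<in> ?A" using v wv by (simp add: pword_def sum_list_rev)
  qed
  moreover have "inj_on rev ?B" by (simp add: inj_on_def)
  ultimately show "F (rev u) n s = F u n s" unfolding F_def by (simp add: card_image)
qed

lemma F_short: assumes "n < length v" shows "F v n s = 0"
proof -
  have "{w. pword w \<and> length w = n \<and> sum_list w = s \<and> gfo v w} = {}"
    using assms by (auto simp: gfo_def)
  then show ?thesis unfolding F_def by (metis card.empty)
qed

lemma F_self: "pword v \<Longrightarrow> 1 \<le> F v (length v) (sum_list v)"
proof -
  assume p: "pword v"
  let ?S = "{w. pword w \<and> length w = length v \<and> sum_list w = sum_list v \<and> gfo v w}"
  have "finite ?S" by (rule finite_subset[OF _ finD[of "length v" "sum_list v"]]) auto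
  moreover have "v \<in> ?S" using p by (auto simp: gfo_def intro: exI[of _ 0])
  ultimately have "card ?S \<noteq> 0" by auto
  then show ?thesis unfolding F_def by simp
qed


lemma arith_final:
  fixes a b c x y z :: nat
  assumes "a < b" "b \<le> c"
    and "x + y + z = a + b + c"
    and "x + max x y + max y z + z = b + max b a + max a c + c"
    and "x + y + max x z + y + z = b + a + max b c + a + c"
    and "x + max x y + max (max x y) z + max y z + z = b + max b a + max (max b a) c + max a c + c"
  shows "[x,y,z] = [b,a,c] \<or> [x,y,z] = [c,a,b]"
  using assms by (auto simp: max_def split: if_splits)

lemma key:
  assumes ab: "1 \<le> a" "a < b" "b \<le> c" and xyz: "1 \<le> x" "1 \<le> y" "1 \<le> z"
    and eq: "F [x,y,z] = F [b,a,c]"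
  shows "[x,y,z] = [b,a,c] \<or> [x,y,z] = [c,a,b]"
proof -
  have u1: "1 \<le> b" "1 \<le> a" "1 \<le> c" using ab by auto
  have sm4: "sum_list (map2 max [x,y,z,1] [1,x,y,z]) = x + max x y + max y z + z" if "1 \<le> x" "1 \<le> z" for x y z :: nat
    using that by (simp add: max_def)
  have sm5a: "sum_list (map2 max [x,y,z,1,1] [1,x,y,z,1]) = x + max x y + max y z + z + 1" if "1 \<le> x" "1 \<le> z" for x y z :: nat
    using that by (simp add: max_def)
  have sm5b: "sum_list (map2 max [1,x,y,z,1] [1,1,x,y,z]) = x + max x y + max y z + z + 1" if "1 \<le> x" "1 \<le> z" for x y z :: nat
    using that by (simp add: max_def)
  have sm5c: "sum_list (map2 max [x,y,z,1,1] [1,1,x,y,z]) = x + y + max x z + y + z" if "1 \<le> x" "1 \<le> y" "1 \<le> z" for x y z :: nat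
    using that by (simp add: max_def)
  have sm5d: "sum_list (map2 max (map2 max [x,y,z,1,1] [1,x,y,z,1]) [1,1,x,y,z]) = x + max x y + max (max x y) z + max y z + z" if "1 \<le> x" "1 \<le> y" "1 \<le> z" for x y z :: nat
    using that by (simp add: max_def)
  have "g 3 (x+y+z) s = g 3 (b+a+c) s" for s
    using fun_cong[OF fun_cong[OF eq, of 3], of s] F3[OF xyz] F3[OF u1] by simp
  then have e1: "x+y+z = b+a+c" by (rule g_inj)
  have "g 4 (x + max x y + max y z + z) s = g 4 (b + max b a + max a c + c) s" for s
  proof -
    have "int (F [x,y,z] 4 s) = int (F [b,a,c] 4 s)" using eq by simp
    moreover note F4[OF xyz, of s, unfolded sm4[OF xyz(1,3)]] F4[OF u1, of s, unfolded sm4[OF u1(1,3)]]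
    moreover have "g 4 (x+y+z+1) s = g 4 (b+a+c+1) s" using e1 by simp
    ultimately show ?thesis by linarith
  qed
  then have e2: "x + max x y + max y z + z = b + max b a + max a c + c" by (rule g_inj)
  have "int (g 5 (b + max b a + max (max b a) c + max a c + c) s) - int (g 5 (b + a + max b c + a + c) s)
      = int (g 5 (x + max x y + max (max x y) z + max y z + z) s) - int (g 5 (x + y + max x z + y + z) s)" for s
  proof -
    have "int (F [x,y,z] 5 s) = int (F [b,a,c] 5 s)" using eq by simp
    moreover note F5[OF xyz, of s, unfolded sm5a[OF xyz(1,3)] sm5b[OF xyz(1,3)] sm5c[OF xyz] sm5d[OF xyz]]
      F5[OF u1, of s, unfolded sm5a[OF u1(1,3)] sm5b[OF u1(1,3)] sm5c[OF u1] sm5d[OF u1]]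
    moreover have "g 5 (x+y+z+2) s = g 5 (b+a+c+2) s" using e1 by simp
    moreover have "g 5 (x + max x y + max y z + z + 1) s = g 5 (b + max b a + max a c + c + 1) s" using e2 by simp
    ultimately show ?thesis by linarith
  qed
  moreover have "b + a + max b c + a + c < b + max b a + max (max b a) c + max a c + c"
    using ab by (simp add: max_def)
  moreover have "x + y + max x z + y + z \<le> x + max x y + max (max x y) z + max y z + z"
    by (simp add: max_def)
  ultimately have e34: "b + a + max b c + a + c = x + y + max x z + y + z \<and>
      b + max b a + max (max b a) c + max a c + c = x + max x y + max (max x y) z + max y z + z"
    by (rule g_pair)
  show ?thesis using arith_final[OF ab(2,3)] e1 e2 e34 by simp
qed

theorem corollary6:
  fixes a b c :: nat
  assumes "1 \<le> a" and "a < b" and "b \<le> c"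
  shows "{v. pword v \<and> wilf_equiv v [b, a, c]} = {[b, a, c], [c, a, b]}"
proof (intro equalityI subsetI)
  fix v assume "v \<in> {v. pword v \<and> wilf_equiv v [b, a, c]}"
  then have pv: "pword v" and eq: "F v = F [b,a,c]" by (auto simp: wilf_equiv_def)
  have pu: "pword [b,a,c]" using assms by (simp add: pword_def)
  have "length v = 3"
  proof (rule ccontr)
    assume "length v \<noteq> 3"
    then consider "length v < 3" | "3 < length v" by linarith
    then show False
    proof cases
      case 1
      have "1 \<le> F v (length v) (sum_list v)" by (rule F_self[OF pv])
      moreover have "F [b,a,c] (length v) (sum_list v) = 0" using 1 by (intro F_short) simp
      ultimately show False using eq by simp
    next
      case 2
      have "1 \<le> F [b,a,c] 3 (sum_list [b,a,c])" using F_self[OF pu] by (simp add: numeral_3_eq_3)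
      moreover have "F v 3 (sum_list [b,a,c]) = 0" using 2 by (intro F_short)
      ultimately show False using eq by simp
    qed
  qed
  then obtain x y z where v: "v = [x,y,z]" by (auto simp: numeral_eq_Suc length_Suc_conv)
  have xyz: "1 \<le> x" "1 \<le> y" "1 \<le> z" using pv v by (auto simp: pword_def)
  show "v \<in> {[b, a, c], [c, a, b]}" using key[OF assms xyz] eq v by auto
next
  fix v assume "v \<in> {[b, a, c], [c, a, b]}"
  moreover have "F [c,a,b] = F [b,a,c]" using F_rev[of "[b,a,c]"] by simp
  ultimately show "v \<in> {v. pword v \<and> wilf_equiv v [b, a, c]}"
    using assms by (auto simp: wilf_equiv_def pword_def)
qed

end
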